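(* Let $\mathsf{\Sigma}\in\mathbb{R}^{N\times N_S}$ and $\mathsf{\Lambda}\in\mathbb{R}^{N\times N_L}$ be the Star-to-RWG and Loop-to-RWG matrices of a triangular surface mesh (see context), so that $\mathsf{\Sigma}^{\mathrm T}\mathsf{\Lambda}=\mathsf{0}$. For $1\le n\le N_S$ and $1\le m\le N_L$ define the filtered Star and Loop matrices $$\mathsf{\Sigma}_n=\mathsf{\Sigma}(\mathsf{\Sigma}^{\mathrm T}\mathsf{\Sigma})^+(\mathsf{\Sigma}^{\mathrm T}\mathsf{\Sigma})_n,\qquad \mathsf{\Lambda}_m=\mathsf{\Lambda}(\mathsf{\Lambda}^{\mathrm T}\mathsf{\Lambda})^+(\mathsf{\Lambda}^{\mathrm T}\mathsf{\Lambda})_m .$$ Then $\mathsf{\Sigma}_n^{\mathrm T}\mathsf{\Lambda}_m=\mathsf{0}$ for all such $n,m$.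
   Context: Consider a closed triangulated surface with $N$ edges, $N_S$ triangles (cells) and $N_L$ vertices. Each edge $m$ is shared by two triangles $c_m^+$ and $c_m^-$. The Star-to-RWG matrix is defined by $[\mathsf{\Sigma}]_{mn}=1$ if cell $n$ is $c_m^+$, $-1$ if cell $n$ is $c_m^-$, and $0$ otherwise. The Loop-to-RWG matrix $\mathsf{\Lambda}$ has $[\mathsf{\Lambda}]_{mn}=\pm1$ when vertex $n$ is one of the two endpoints of edge $m$ (opposite signs for the two endpoints, fixed by the orientation convention of the RWG functions) and $0$ otherwise; with this convention $\mathsf{\Sigma}^{\mathrm T}\mathsf{\Lambda}=\mathsf{0}$. $^+$ denotes the Moore–Penrose pseudo-inverse. Filtered Laplacian: for $\mathsf{X}\in\{\mathsf{\Sigma},\mathsf{\Lambda}\}$ with $N_x$ columns, let $\mathsf{X}=\mathsf{U}_X\mathsf{S}_X\mathsf{V}_X^{\mathrm T}$ be a (fixed) singular value decomposition with $\mathsf{V}_X\in\mathbb{R}^{N_x\times N_x}$ orthogonal and singular values $\sigma_{X,1}\ge\sigma_{X,2}\ge\dots\ge\sigma_{X,N_x}\ge0$, so that $\mathsf{X}^{\mathrm T}\mathsf{X}=\mathsf{V}_X\,\mathrm{diag}(\sigma_{X,i}^2)\,\mathsf{V}_X^{\mathrm T}$. For $1\le n\le N_x$ let $\mathsf{L}_{X,n}$ be the $N_x\times N_x$ diagonal matrix with $[\mathsf{L}_{X,n}]_{ii}=\sigma_{X,i}$ if $i>N_x-n$ and $0$ otherwise, and set $(\mathsf{X}^{\mathrm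 T}\mathsf{X})_n=\mathsf{V}_X\mathsf{L}_{X,n}^2\mathsf{V}_X^{\mathrm T}$. *)

theory Defs
  imports "Jordan_Normal_Form.Matrix"
begin

text \<open>Real matrices are Jordan_Normal_Form matrices (row/column indices start at 0).\<close>

definition star_mat :: "nat \<Rightarrow> nat \<Rightarrow> (nat \<Rightarrow> nat) \<Rightarrow> (nat \<Rightarrow> nat) \<Rightarrow> real mat" where
  "star_mat N NS cp cm = mat N NS (\<lambda>(m, n). if n = cp m then 1 else if n = cm m then -1 else 0)"

text \<open>Loop-to-RWG matrix: N x NL; row m has s m in column va m and - s m in column vb m,
  where va m, vb m are the endpoints of edge m and s m in {1,-1} is the orientation sign.\<close>
definition loop_mat :: "nat \<Rightarrow> nat \<Rightarrow> (nat \<Rightarrow> nat) \<Rightarrow> (nat \<Rightarrow> nat) \<Rightarrow> (nat \<Rightarrow> real) \<Rightarrow> real mat" where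
  "loop_mat N NL va vb s = mat N NL (\<lambda>(m, n). if n = va m then s m else if n = vb m then - s m else 0)"

definition is_pinv :: "real mat \<Rightarrow> real mat \<Rightarrow> bool" where
  "is_pinv A X \<longleftrightarrow> X \<in> carrier_mat (dim_col A) (dim_row A) \<and>
     A * X * A = A \<and> X * A * X = X \<and>
     transpose_mat (A * X) = A * X \<and> transpose_mat (X * A) = X * A"

definition pinv :: "real mat \<Rightarrow> real mat" where
  "pinv A = (THE X. is_pinv A X)"

definition orthogonal_mat :: "nat \<Rightarrow> real mat \<Rightarrow> bool" where
  "orthogonal_mat k V \<longleftrightarrow> V \<in> carrier_mat k k \<and> transpose_mat V * V = 1\<^sub>m k \<and> V * transpose_mat V = 1\<^sub>m k"

text \<open>Singular value decomposition X = U S V^T of an r x c matrix X, with U (r x r) and V (c x c)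
  orthogonal, S the r x c rectangular diagonal matrix with entries sigma 0 \<ge> sigma 1 \<ge> ... \<ge> 0
  (0-based: sigma i is the (i+1)-th singular value, for i < c; sigma i = 0 if i \<ge> r).\<close>
definition is_svd :: "real mat \<Rightarrow> real mat \<Rightarrow> (nat \<Rightarrow> real) \<Rightarrow> real mat \<Rightarrow> bool" where
  "is_svd X U \<sigma> V \<longleftrightarrow>
     orthogonal_mat (dim_row X) U \<and> orthogonal_mat (dim_col X) V \<and>
     (\<forall>i < dim_col X. 0 \<le> \<sigma> i) \<and> (\<forall>i. dim_row X \<le> i \<longrightarrow> i < dim_col X \<longrightarrow> \<sigma> i = 0) \<and> (\<forall>i j. i \<le> j \<longrightarrow> j < dim_col X \<longrightarrow> \<sigma> j \<le> \<sigma> i) \<and>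
     X = U * mat (dim_row X) (dim_col X) (\<lambda>(i, j). if i = j then \<sigma> i else 0) * transpose_mat V"

text \<open>Filtered Laplacian (X^T X)_n = V L_n^2 V^T, where (1-based) [L_n]_ii = sigma_i for i > c - n,
  i.e. 0-based index i \<ge> c - n.\<close>
definition filt_L :: "nat \<Rightarrow> (nat \<Rightarrow> real) \<Rightarrow> nat \<Rightarrow> real mat" where
  "filt_L c \<sigma> n = mat c c (\<lambda>(i, j). if i = j \<and> c - n \<le> i then \<sigma> i else 0)"

definition filt_lap :: "nat \<Rightarrow> real mat \<Rightarrow> (nat \<Rightarrow> real) \<Rightarrow> nat \<Rightarrow> real mat" where
  "filt_lap c V \<sigma> n = V * (filt_L c \<sigma> n * filt_L c \<sigma> n) * transpose_mat V"

definition filt_mat :: "real mat \<Rightarrow> real mat \<Rightarrow> (nat \<Rightarrow> real) \<Rightarrow> nat \<Rightarrow> real mat" where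
  "filt_mat X V \<sigma> n = X * pinv (transpose_mat X * X) * filt_lap (dim_col X) V \<sigma> n"

end

theory Submission
  imports Defs
begin

definition rdiag :: "nat \<Rightarrow> nat \<Rightarrow> (nat \<Rightarrow> real) \<Rightarrow> real mat" where
  "rdiag r c f = mat r c (\<lambda>(i,j). if i = j then f i else 0)"

lemma rdiag_carrier[simp]: "rdiag r c f \<in> carrier_mat r c"
  by (simp add: rdiag_def)

lemma rdiag_dims[simp]: "dim_row (rdiag r c f) = r" "dim_col (rdiag r c f) = c"
  by (simp_all add: rdiag_def)

lemma rdiag_transpose: "transpose_mat (rdiag r c f) = rdiag c r f"
  by (intro eq_matI) (auto simp: rdiag_def)

lemma rdiag_mult: "rdiag r k f * rdiag k c g = rdiag r c (\<lambda>i. if i < k then f i * g i else 0)"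
proof (intro eq_matI)
  fix i j assume ij: "i < dim_row (rdiag r c (\<lambda>i. if i < k then f i * g i else 0))"
     "j < dim_col (rdiag r c (\<lambda>i. if i < k then f i * g i else 0))"
  have "(rdiag r k f * rdiag k c g) $$ (i,j) = (\<Sum>l\<in>{0..<k}. (if i = l then f i else 0) * (if l = j then g l else 0))"
    using ij by (auto simp: rdiag_def scalar_prod_def intro!: sum.cong)
  also have "\<dots> = (\<Sum>l\<in>{0..<k}. (if l = i then (if i = j then f i * g i else 0) else 0))"
    by (rule sum.cong) auto
  also have "\<dots> = rdiag r c (\<lambda>i. if i < k then f i * g i else 0) $$ (i,j)"
    using ij by (simp add: rdiag_def)
  finally show "(rdiag r k f * rdiag k c g) $$ (i,j) = rdiag r c (\<lambda>i. if i < k then f i * g i else 0) $$ (i,j)" .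
qed auto

lemma pinv_unique:
  assumes A: "A \<in> carrier_mat r c" and X: "is_pinv A X" and Y: "is_pinv A Y"
  shows "X = Y"
proof -
  have Xc: "X \<in> carrier_mat c r" using X A by (simp add: is_pinv_def)
  have Yc: "Y \<in> carrier_mat c r" using Y A by (simp add: is_pinv_def)
  note XX = X[unfolded is_pinv_def] and YY = Y[unfolded is_pinv_def]
  have c1: "A * X \<in> carrier_mat r r" "A * Y \<in> carrier_mat r r" "X * A \<in> carrier_mat c c" "Y * A \<in> carrier_mat c c"
    "transpose_mat A \<in> carrier_mat c r" "transpose_mat X \<in> carrier_mat r c" "transpose_mat Y \<in> carrier_mat r c"
    using A Xc Yc by auto
  have AT1: "transpose_mat A = transpose_mat A * (A * Y)"
  proof -
    have "transpose_mat A = transpose_mat ((A * Y) * A)" using YY by simp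
    also have "\<dots> = transpose_mat A * transpose_mat (A * Y)"
      using A Yc by (meson mult_carrier_mat transpose_mult)
    also have "\<dots> = transpose_mat A * (A * Y)" using YY by simp
    finally show ?thesis .
  qed
  have AT2: "transpose_mat A = (X * A) * transpose_mat A"
  proof -
    have "transpose_mat A = transpose_mat (A * (X * A))" using XX A Xc by simp
    also have "\<dots> = transpose_mat (X * A) * transpose_mat A"
      using A Xc by (meson mult_carrier_mat transpose_mult)
    also have "\<dots> = (X * A) * transpose_mat A" using XX by simp
    finally show ?thesis .
  qed
  have XAX: "X * (A * X) = X" using XX assoc_mult_mat[OF Xc A Xc] by simp
  have "X = X * (A * X)" using XAX by simp
  also have "\<dots> = X * transpose_mat (A * X)" using XX by simp
  also have "\<dots> = X * (transpose_mat X * transpose_mat A)"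
    using A Xc by (simp add: transpose_mult)
  also have "\<dots> = X * (transpose_mat X * (transpose_mat A * (A * Y)))"
    using AT1 by simp
  also have "\<dots> = X * ((transpose_mat X * transpose_mat A) * (A * Y))"
    using assoc_mult_mat[OF c1(6) c1(5) c1(2)] by simp
  also have "\<dots> = X * (transpose_mat (A * X) * (A * Y))"
    using A Xc by (simp add: transpose_mult)
  also have "\<dots> = X * ((A * X) * (A * Y))" using XX by simp
  also have "\<dots> = (X * (A * X)) * (A * Y)" using assoc_mult_mat[OF Xc c1(1) c1(2)] by simp
  also have "\<dots> = X * (A * Y)" using XAX by simp
  finally have 1: "X = X * (A * Y)" .
  have "Y = (Y * A) * Y" using YY by simp
  also have "\<dots> = transpose_mat (Y * A) * Y" using YY by simp
  also have "\<dots> = (transpose_mat A * transpose_mat Y) * Y"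
    using A Yc by (simp add: transpose_mult)
  also have "\<dots> = (((X * A) * transpose_mat A) * transpose_mat Y) * Y"
    using AT2 by simp
  also have "\<dots> = ((X * A) * (transpose_mat A * transpose_mat Y)) * Y"
    using assoc_mult_mat[OF c1(3) c1(5) c1(7)] by simp
  also have "\<dots> = ((X * A) * transpose_mat (Y * A)) * Y"
    using A Yc by (simp add: transpose_mult)
  also have "\<dots> = ((X * A) * (Y * A)) * Y" using YY by simp
  also have "\<dots> = (X * A) * ((Y * A) * Y)" using assoc_mult_mat[OF c1(3) c1(4) Yc] by simp
  also have "\<dots> = (X * A) * Y" using YY by simp
  also have "\<dots> = X * (A * Y)" using assoc_mult_mat[OF Xc A Yc] by simp
  finally show ?thesis using 1 by simp
qed


lemma rdiag_cong: "(\<And>i. i < r \<Longrightarrow> i < c \<Longrightarrow> f i = g i) \<Longrightarrow> rdiag r c f = rdiag r c g"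
  by (intro eq_matI) (auto simp: rdiag_def)

lemma conj_mult:
  assumes V: "orthogonal_mat k V" and P: "P \<in> carrier_mat k k" and Q: "Q \<in> carrier_mat k k"
  shows "(V * P * transpose_mat V) * (V * Q * transpose_mat V) = V * (P * Q) * transpose_mat V"
proof -
  have Vc: "V \<in> carrier_mat k k" and VV: "transpose_mat V * V = 1\<^sub>m k"
    using V by (auto simp: orthogonal_mat_def)
  have Vt: "transpose_mat V \<in> carrier_mat k k" using Vc by simp
  have VP: "V * P \<in> carrier_mat k k" "Q * transpose_mat V \<in> carrier_mat k k" using Vc P Q Vt by auto
  have "(V * P * transpose_mat V) * (V * Q * transpose_mat V)
      = (V * P) * (transpose_mat V * (V * (Q * transpose_mat V)))"
    using assoc_mult_mat[OF VP(1) Vt, of "V * (Q * transpose_mat V)" k]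
      assoc_mult_mat[OF Vc Q Vt] Vc VP by simp
  also have "transpose_mat V * (V * (Q * transpose_mat V)) = Q * transpose_mat V"
    by (metis assoc_mult_mat[OF Vt Vc VP(2)] VV left_mult_one_mat VP(2))
  also have "(V * P) * (Q * transpose_mat V) = V * (P * Q) * transpose_mat V"
    using assoc_mult_mat[OF Vc P Q] assoc_mult_mat[OF VP(1) Q Vt] assoc_mult_mat[of "V * P * Q" k k "transpose_mat V"] Vc P Q Vt
    by (metis mult_carrier_mat)
  finally show ?thesis .
qed

lemma conj_transpose:
  assumes V: "orthogonal_mat k V" and P: "P \<in> carrier_mat k k"
  shows "transpose_mat (V * P * transpose_mat V) = V * transpose_mat P * transpose_mat V"
proof -
  have Vc: "V \<in> carrier_mat k k" using V by (auto simp: orthogonal_mat_def)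
  have "transpose_mat (V * P * transpose_mat V) = V * transpose_mat (V * P)"
    using transpose_mult[of "V * P" k k "transpose_mat V" k] Vc P by simp
  also have "\<dots> = V * (transpose_mat P * transpose_mat V)"
    using transpose_mult[OF Vc P] by simp
  also have "\<dots> = V * transpose_mat P * transpose_mat V"
    using assoc_mult_mat[OF Vc, of "transpose_mat P" k "transpose_mat V" k] Vc P by simp
  finally show ?thesis .
qed

lemma pinv_exists:
  fixes h :: "nat \<Rightarrow> real"
  assumes V: "orthogonal_mat k V"
  defines "h' \<equiv> (\<lambda>i. if h i = 0 then 0 else 1 / h i)"
  shows "is_pinv (V * rdiag k k h * transpose_mat V) (V * rdiag k k h' * transpose_mat V)"
proof -
  have Vc: "V \<in> carrier_mat k k" using V by (auto simp: orthogonal_mat_def)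
  have D1: "rdiag k k h * rdiag k k h' * rdiag k k h = rdiag k k h"
    unfolding rdiag_mult by (rule rdiag_cong) (simp add: h'_def)
  have D2: "rdiag k k h' * rdiag k k h * rdiag k k h' = rdiag k k h'"
    unfolding rdiag_mult by (rule rdiag_cong) (simp add: h'_def)
  define D where "D = rdiag k k h"
  define D' where "D' = rdiag k k h'"
  have Dc: "D \<in> carrier_mat k k" "D' \<in> carrier_mat k k" by (auto simp: D_def D'_def)
  have DD1: "D * D' \<in> carrier_mat k k" "D' * D \<in> carrier_mat k k" using Dc by auto
  have AX: "(V * D * transpose_mat V) * (V * D' * transpose_mat V) = V * (D * D') * transpose_mat V"
    by (rule conj_mult[OF V Dc])
  have XA: "(V * D' * transpose_mat V) * (V * D * transpose_mat V) = V * (D' * D) * transpose_mat V"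
    by (rule conj_mult[OF V Dc(2,1)])
  have D1': "D * D' * D = D" using D1 unfolding D_def D'_def .
  have D2': "D' * D * D' = D'" using D2 unfolding D_def D'_def .
  have AXA: "(V * D * transpose_mat V) * (V * D' * transpose_mat V) * (V * D * transpose_mat V) = V * D * transpose_mat V"
    unfolding AX conj_mult[OF V DD1(1) Dc(1)] D1' ..
  have XAX: "(V * D' * transpose_mat V) * (V * D * transpose_mat V) * (V * D' * transpose_mat V) = V * D' * transpose_mat V"
    unfolding XA conj_mult[OF V DD1(2) Dc(2)] D2' ..
  have T1: "transpose_mat (V * (D * D') * transpose_mat V) = V * (D * D') * transpose_mat V"
    unfolding conj_transpose[OF V DD1(1)] unfolding D_def D'_def rdiag_mult rdiag_transpose ..
  have T2: "transpose_mat (V * (D' * D) * transpose_mat V) = V * (D' * D) * transpose_mat V"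
    unfolding conj_transpose[OF V DD1(2)] unfolding D_def D'_def rdiag_mult rdiag_transpose ..
  have C: "V * D' * transpose_mat V \<in> carrier_mat (dim_col (V * D * transpose_mat V)) (dim_row (V * D * transpose_mat V))"
  proof -
    have "V * D' * transpose_mat V \<in> carrier_mat k k" using Vc Dc by (meson mult_carrier_mat transpose_carrier_mat)
    moreover have "dim_col (V * D * transpose_mat V) = k" "dim_row (V * D * transpose_mat V) = k"
      using carrier_matD[OF Vc] by simp_all
    ultimately show ?thesis by simp
  qed
  have "is_pinv (V * D * transpose_mat V) (V * D' * transpose_mat V)"
    unfolding is_pinv_def
  proof (intro conjI)
    show "transpose_mat (V * D * transpose_mat V * (V * D' * transpose_mat V)) = V * D * transpose_mat V * (V * D' * transpose_mat V)"
      unfolding AX by (rule T1)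
    show "transpose_mat (V * D' * transpose_mat V * (V * D * transpose_mat V)) = V * D' * transpose_mat V * (V * D * transpose_mat V)"
      unfolding XA by (rule T2)
  qed (fact C AXA XAX)+
  then show ?thesis unfolding D_def D'_def .
qed

lemma svd_gram:
  assumes "is_svd X U \<sigma> V"
  shows "transpose_mat X * X = V * rdiag (dim_col X) (dim_col X) (\<lambda>i. if i < dim_row X then \<sigma> i * \<sigma> i else 0) * transpose_mat V"
proof -
  let ?r = "dim_row X" and ?c = "dim_col X"
  have U: "orthogonal_mat ?r U" and V: "orthogonal_mat ?c V"
    and X: "X = U * rdiag ?r ?c \<sigma> * transpose_mat V"
    using assms by (auto simp: is_svd_def rdiag_def)
  have Uc: "U \<in> carrier_mat ?r ?r" and UU: "transpose_mat U * U = 1\<^sub>m ?r"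
    and Vc: "V \<in> carrier_mat ?c ?c" using U V by (auto simp: orthogonal_mat_def)
  have Ut: "transpose_mat U \<in> carrier_mat ?r ?r" and Vt: "transpose_mat V \<in> carrier_mat ?c ?c" using Uc Vc by auto
  define D where "D = rdiag ?r ?c \<sigma>"
  have Dc: "D \<in> carrier_mat ?r ?c" "transpose_mat D \<in> carrier_mat ?c ?r" by (auto simp: D_def)
  have UD: "U * D \<in> carrier_mat ?r ?c" using Uc Dc by auto
  have tX: "transpose_mat X = V * transpose_mat D * transpose_mat U"
  proof -
    have "transpose_mat X = V * transpose_mat (U * D)"
      using X transpose_mult[OF UD Vt] unfolding D_def by simp
    also have "\<dots> = V * (transpose_mat D * transpose_mat U)" using transpose_mult[OF Uc Dc(1)] by simp
    also have "\<dots> = V * transpose_mat D * transpose_mat U" using assoc_mult_mat[OF Vc Dc(2) Ut] by simp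
    finally show ?thesis .
  qed
  have "transpose_mat X * X = (V * transpose_mat D) * (transpose_mat U * (U * (D * transpose_mat V)))"
    using tX X assoc_mult_mat[OF Vc Dc(2)] assoc_mult_mat[OF Uc Dc(1) Vt]
      assoc_mult_mat[of "V * transpose_mat D" ?c ?r "transpose_mat U" ?r "U * (D * transpose_mat V)" ?c]
      Vc Dc Ut Uc Vt unfolding D_def by simp
  also have "transpose_mat U * (U * (D * transpose_mat V)) = D * transpose_mat V"
    using assoc_mult_mat[OF Ut Uc, of "D * transpose_mat V" ?c] UU Dc Vt by simp
  also have "(V * transpose_mat D) * (D * transpose_mat V) = V * (transpose_mat D * D) * transpose_mat V"
    using assoc_mult_mat[OF Vc Dc(2) Dc(1)] assoc_mult_mat[of "V * transpose_mat D" ?c ?r D ?c "transpose_mat V" ?c]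
      Vc Dc Vt by simp
  also have "transpose_mat D * D = rdiag ?c ?c (\<lambda>i. if i < ?r then \<sigma> i * \<sigma> i else 0)"
    unfolding D_def rdiag_transpose rdiag_mult ..
  finally show ?thesis .
qed

lemma pinv_gram_carrier:
  assumes "is_svd X U \<sigma> V"
  shows "pinv (transpose_mat X * X) \<in> carrier_mat (dim_col X) (dim_col X)"
proof -
  let ?c = "dim_col X"
  have V: "orthogonal_mat ?c V" using assms by (auto simp: is_svd_def)
  obtain h where G: "transpose_mat X * X = V * rdiag ?c ?c h * transpose_mat V"
    using svd_gram[OF assms] by blast
  obtain Y where Y: "is_pinv (transpose_mat X * X) Y" using pinv_exists[OF V, of h] G by auto
  have Gc: "transpose_mat X * X \<in> carrier_mat ?c ?c"
    by (rule mult_carrier_mat[of _ ?c "dim_row X"]) (auto intro: carrier_matI)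
  have "is_pinv (transpose_mat X * X) (pinv (transpose_mat X * X))"
    unfolding pinv_def by (rule theI[of _ Y]) (use Y pinv_unique[OF Gc] in auto)
  then show ?thesis using Gc by (simp add: is_pinv_def)
qed

lemma filt_mat_eq:
  assumes "is_svd X U \<sigma> V"
  shows "filt_mat X V \<sigma> n = X * (pinv (transpose_mat X * X) * filt_lap (dim_col X) V \<sigma> n)"
    "pinv (transpose_mat X * X) * filt_lap (dim_col X) V \<sigma> n \<in> carrier_mat (dim_col X) (dim_col X)"
proof -
  let ?c = "dim_col X"
  have Vc: "V \<in> carrier_mat ?c ?c" using assms by (auto simp: is_svd_def orthogonal_mat_def)
  have F: "filt_lap ?c V \<sigma> n \<in> carrier_mat ?c ?c" using Vc
    by (auto simp: filt_lap_def filt_L_def)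
  have P: "pinv (transpose_mat X * X) \<in> carrier_mat ?c ?c" by (rule pinv_gram_carrier[OF assms])
  show "filt_mat X V \<sigma> n = X * (pinv (transpose_mat X * X) * filt_lap ?c V \<sigma> n)"
    unfolding filt_mat_def by (rule assoc_mult_mat[OF _ P F, of X "dim_row X"]) (auto intro: carrier_matI)
  show "pinv (transpose_mat X * X) * filt_lap (dim_col X) V \<sigma> n \<in> carrier_mat (dim_col X) (dim_col X)"
    using P F by auto
qed

lemma orth_prod:
  fixes S L M K :: "real mat"
  assumes S: "S \<in> carrier_mat N a" and L: "L \<in> carrier_mat N b"
    and M: "M \<in> carrier_mat a a" and K: "K \<in> carrier_mat b b"
    and O: "transpose_mat S * L = 0\<^sub>m a b"
  shows "transpose_mat (S * M) * (L * K) = 0\<^sub>m a b"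
proof -
  have "transpose_mat (S * M) * (L * K) = (transpose_mat M * transpose_mat S) * (L * K)"
    using transpose_mult[OF S M] by simp
  also have "\<dots> = transpose_mat M * (transpose_mat S * (L * K))"
    by (rule assoc_mult_mat[of "transpose_mat M" a a "transpose_mat S" N "L * K" b]) (use S L M K in auto)
  also have "transpose_mat S * (L * K) = (transpose_mat S * L) * K"
    by (rule assoc_mult_mat[of "transpose_mat S" a N L b K b, symmetric]) (use S L K in auto)
  also have "\<dots> = 0\<^sub>m a b" using O K by (simp add: left_mult_zero_mat)
  also have "transpose_mat M * 0\<^sub>m a b = 0\<^sub>m a b" using M by (simp add: right_mult_zero_mat)
  finally show ?thesis .
qed


theorem mainTheorem1:
  fixes N NS NL :: nat
    and cp cm :: "nat \<Rightarrow> nat" \<comment> \<open>the cells c_m^+ and c_m^- of edge m\<close>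
    and va vb :: "nat \<Rightarrow> nat" \<comment> \<open>the two endpoints of edge m\<close>
    and s :: "nat \<Rightarrow> real" \<comment> \<open>orientation sign of edge m\<close>
    and US VS UL VL :: "real mat" and \<sigma>S \<sigma>L :: "nat \<Rightarrow> real"
    and n m :: nat
  assumes cells: "\<And>e. e < N \<Longrightarrow> cp e < NS \<and> cm e < NS \<and> cp e \<noteq> cm e"
    and verts: "\<And>e. e < N \<Longrightarrow> va e < NL \<and> vb e < NL \<and> va e \<noteq> vb e"
    and signs: "\<And>e. e < N \<Longrightarrow> s e = 1 \<or> s e = -1"
    and orth: "transpose_mat (star_mat N NS cp cm) * loop_mat N NL va vb s = 0\<^sub>m NS NL"
    and svdS: "is_svd (star_mat N NS cp cm) US \<sigma>S VS"
    and svdL: "is_svd (loop_mat N NL va vb s) UL \<sigma>L VL"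
    and n: "1 \<le> n" "n \<le> NS"
    and m: "1 \<le> m" "m \<le> NL"
  shows "transpose_mat (filt_mat (star_mat N NS cp cm) VS \<sigma>S n)
           * filt_mat (loop_mat N NL va vb s) VL \<sigma>L m = 0\<^sub>m NS NL"
proof -
  have S: "star_mat N NS cp cm \<in> carrier_mat N NS" by (simp add: star_mat_def)
  have L: "loop_mat N NL va vb s \<in> carrier_mat N NL" by (simp add: loop_mat_def)
  have dS: "dim_col (star_mat N NS cp cm) = NS" by (simp add: star_mat_def)
  have dL: "dim_col (loop_mat N NL va vb s) = NL" by (simp add: loop_mat_def)
  show ?thesis
    unfolding filt_mat_eq(1)[OF svdS] filt_mat_eq(1)[OF svdL]
    by (rule orth_prod[OF S L _ _ orth]) (use filt_mat_eq(2)[OF svdS] filt_mat_eq(2)[OF svdL] dS dL in auto)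
qed

end
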